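(* Let $t:\Sigma^*\to\Omega^*$ be a rational partial function with suffix-closed domain $X=\mathrm{dom}(t)$, let $B$ be a trim right-subsequential transducer for $t[\mathcal R_t]$, and let $A$ be the right transducer obtained from $B$ by projecting input letters to their first component. If $A$ is not well-behaved, then $X$ contains a linear fooling set for $t$.
   Context: $x\wedge y$: longest common suffix; $\|x,y\|=|x|+|y|-2|x\wedge y|$. $u\mathrel{\mathcal R_t}v$ iff $\{z:uz\in X\}=\{z:vz\in X\}$ and $\{\|t(uw),t(vw)\|:uw,vw\in X\}$ is finite; $\mathcal R_t$ is a finite-index right congruence. For a finite-index right congruence $\mathcal R$, the look-ahead extension is $e_{\mathcal R}(a_1\cdots a_n)=(a_1,[\varepsilon]_{\mathcal R})(a_2,[a_1]_{\mathcal R})\cdots(a_n,[a_1\cdots a_{n-1}]_{\mathcal R})$ over the alphabet $\Sigma\times\Sigma^*/\mathcal R$, and $t[\mathcal R]$ is the partial function with domain $e_{\mathcal R}(X)$ and $t[\mathcal R](e_{\mathcal R}(x))=t(x)$. A real-time right transducer $(Q,\Gamma,\Omega,F,\Delta,I,o)$ has transitions $(q,a,y,p)\in Q\times\Gamma\times\Omega^*\times Q$, read as going from $p$ to $q$ while reading $a$ and outputting $y$; runs read the input from right to left: a run on $a_1\cdots a_n$ from $q_n$ to $q_0$ is $(q_0,a_1,y_1,q_1)\cdots(q_{n-1},a_n,y_n,q_n)$, with output $\mathsf{out}=y_1\cdots y_n$; it is initial if $q_n\in I$, accepting if $q_0\in F$, and then $\mathsf{out}_F=o(q_0)y_1\cdots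 y_n$ where $o:F\to\Omega^*$ is the terminal output; the transducer defines the relation of pairs (input, $\mathsf{out}_F$ of an initial accepting run). It is right-subsequential if $I=\{q_{\mathit{in}}\}$ and it is deterministic when reading right to left (for each state $p$ and letter $a$ at most one transition from $p$ reading $a$); it is trim if every state occurs on some initial accepting run. (By Reutenauer–Schützenberger, $t[\mathcal R_t]$ is right-subsequential.) $A$ has the same states, $F$, $q_{\mathit{in}}$, $o$, and transitions $\{(q,a,y,p):(q,(a,\rho),y,p)\in\Delta_B\}$; it defines $t$ and is unambiguous. Let $q\preceq p$ iff there is a run in $A$ from $p$ to $q$. A word $w$ is guarded by $p$ if there is a run in $A$ on $w$ from $p$ to some $q'$ with $p\preceq q'$; a run from $p$ on $w$ is guarded if $w$ is guarded by $p$. $A$ is well-behaved if for every state $p$ and all guarded runs $\pi,\pi'$ starting in $p$ and ending in $F$ with inputs of equal length, $\mathsf{out}_F(\pi)=\mathsf{out}_F(\pi')$. Linear fooling scheme for $t$: $(u_2,v_2,u,v,Z)$ with $u_2$ a suffix of $u$, $v_2$ a suffix of $v$, $|u_2|=|v_2|$, $\{u_2,v_2\}\{u,v\}^*Z\subseteq X$, and for each $n$ some $z_n\in Z$ with $|z_n|\in O(n)$ and $t(u_2wz_n)\ne t(v_2wz_n)$ for all $w\in\{u,v\}^{\le n}$; $\{u_2,v_2\}\{u,v\}^*Z$ is a linear fooling set. *)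

theory Defs
  imports Main "HOL-Library.Sublist"
begin

definition lcsuffix :: "'a list \<Rightarrow> 'a list \<Rightarrow> 'a list" where
  "lcsuffix x y = rev (longest_common_prefix (rev x) (rev y))"

definition wdist :: "'a list \<Rightarrow> 'a list \<Rightarrow> nat" where
  "wdist x y = length x + length y - 2 * length (lcsuffix x y)"

definition suffix_closed :: "'a list set \<Rightarrow> bool" where
  "suffix_closed X \<longleftrightarrow> (\<forall>x y. suffix y x \<and> x \<in> X \<longrightarrow> y \<in> X)"

inductive gpath :: "('q \<times> 'a list \<times> 'b list \<times> 'q) set \<Rightarrow> 'q \<Rightarrow> 'a list \<Rightarrow> 'b list \<Rightarrow> 'q \<Rightarrow> bool"
  for D where
  gnil: "gpath D p [] [] p"
| gstep: "(p, u, v, p') \<in> D \<Longrightarrow> gpath D p' x z q \<Longrightarrow> gpath D p (u @ x) (v @ z) q"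

definition rational_pfun :: "('a list \<Rightarrow> 'b list option) \<Rightarrow> bool" where
  "rational_pfun t \<longleftrightarrow>
     (\<exists>(Q::nat set) D I F. finite Q \<and> finite D \<and> D \<subseteq> Q \<times> UNIV \<times> UNIV \<times> Q \<and> I \<subseteq> Q \<and> F \<subseteq> Q \<and>
        (\<forall>x z. t x = Some z \<longleftrightarrow> (\<exists>p q. p \<in> I \<and> q \<in> F \<and> gpath D p x z q)))"

definition Rt :: "('a list \<Rightarrow> 'b list option) \<Rightarrow> 'a list \<Rightarrow> 'a list \<Rightarrow> bool" where
  "Rt t u v \<longleftrightarrow>
     {z. u @ z \<in> dom t} = {z. v @ z \<in> dom t} \<and>
     finite {wdist (the (t (u @ w))) (the (t (v @ w))) | w. u @ w \<in> dom t \<and> v @ w \<in> dom t}"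

definition rclass :: "('a list \<Rightarrow> 'a list \<Rightarrow> bool) \<Rightarrow> 'a list \<Rightarrow> 'a list set" where
  "rclass R u = {v. R u v}"

definition classes :: "('a list \<Rightarrow> 'a list \<Rightarrow> bool) \<Rightarrow> 'a list set set" where
  "classes R = {rclass R u | u. True}"

definition lookahead_ext :: "('a list \<Rightarrow> 'a list \<Rightarrow> bool) \<Rightarrow> 'a list \<Rightarrow> ('a \<times> 'a list set) list" where
  "lookahead_ext R x = map (\<lambda>i. (x ! i, rclass R (take i x))) [0..<length x]"

definition ext_fun :: "('a list \<Rightarrow> 'a list \<Rightarrow> bool) \<Rightarrow> ('a list \<Rightarrow> 'b list option)
    \<Rightarrow> ('a \<times> 'a list set) list \<Rightarrow> 'b list option" where
  "ext_fun R t w = (if \<exists>x \<in> dom t. lookahead_ext R x = w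
                    then t (THE x. x \<in> dom t \<and> lookahead_ext R x = w) else None)"

record ('q, 'c, 'b) rtt =
  st :: "'q set"
  trans :: "('q \<times> 'c \<times> 'b list \<times> 'q) set"
  init :: "'q set"
  fin :: "'q set"
  tout :: "'q \<Rightarrow> 'b list"

text \<open>rrun D p w q y: a run on w from p to q (input read right to left) with output y.
  A run on a1...an from qn to q0 is (q0,a1,y1,q1)...(q(n-1),an,yn,qn), output y1...yn.\<close>
inductive rrun :: "('q \<times> 'c \<times> 'b list \<times> 'q) set \<Rightarrow> 'q \<Rightarrow> 'c list \<Rightarrow> 'q \<Rightarrow> 'b list \<Rightarrow> bool"
  for D where
  rnil: "rrun D p [] p []"
| rcons: "(q, a, y, q1) \<in> D \<Longrightarrow> rrun D p w q1 y' \<Longrightarrow> rrun D p (a # w) q (y @ y')"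

definition rtt_wf :: "('q, 'c, 'b) rtt \<Rightarrow> 'c set \<Rightarrow> bool" where
  "rtt_wf T \<Gamma> \<longleftrightarrow> finite (st T) \<and> finite \<Gamma> \<and> finite (trans T) \<and>
     trans T \<subseteq> st T \<times> \<Gamma> \<times> UNIV \<times> st T \<and> init T \<subseteq> st T \<and> fin T \<subseteq> st T"

definition rtt_rel :: "('q, 'c, 'b) rtt \<Rightarrow> ('c list \<times> 'b list) set" where
  "rtt_rel T = {(x, z). \<exists>p q y. p \<in> init T \<and> rrun (trans T) p x q y \<and> q \<in> fin T \<and> z = tout T q @ y}"

definition rtt_defines :: "('q, 'c, 'b) rtt \<Rightarrow> ('c list \<Rightarrow> 'b list option) \<Rightarrow> bool" where
  "rtt_defines T f \<longleftrightarrow> rtt_rel T = {(x, z). f x = Some z}"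

definition right_subsequential :: "('q, 'c, 'b) rtt \<Rightarrow> bool" where
  "right_subsequential T \<longleftrightarrow> (\<exists>q. init T = {q}) \<and>
     (\<forall>p a q y q' y'. (q, a, y, p) \<in> trans T \<and> (q', a, y', p) \<in> trans T \<longrightarrow> q = q' \<and> y = y')"

definition trim :: "('q, 'c, 'b) rtt \<Rightarrow> bool" where
  "trim T \<longleftrightarrow> (\<forall>s \<in> st T. \<exists>p x1 x2 q y1 y2. p \<in> init T \<and> rrun (trans T) p x2 s y2 \<and>
                                  rrun (trans T) s x1 q y1 \<and> q \<in> fin T)"

definition project :: "('q, 'a \<times> 'r, 'b) rtt \<Rightarrow> ('q, 'a, 'b) rtt" where
  "project B = \<lparr> st = st B, trans = {(q, a, y, p) | q a r y p. (q, (a, r), y, p) \<in> trans B},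
                 init = init B, fin = fin B, tout = tout B \<rparr>"

definition below :: "('q, 'c, 'b) rtt \<Rightarrow> 'q \<Rightarrow> 'q \<Rightarrow> bool" where
  "below T q p \<longleftrightarrow> (\<exists>w y. rrun (trans T) p w q y)"

definition guarded :: "('q, 'c, 'b) rtt \<Rightarrow> 'q \<Rightarrow> 'c list \<Rightarrow> bool" where
  "guarded T p w \<longleftrightarrow> (\<exists>q' y. rrun (trans T) p w q' y \<and> below T p q')"

definition well_behaved :: "('q, 'c, 'b) rtt \<Rightarrow> bool" where
  "well_behaved T \<longleftrightarrow>
     (\<forall>p \<in> st T. \<forall>w w' q q' y y'.
        guarded T p w \<and> guarded T p w' \<and> rrun (trans T) p w q y \<and> rrun (trans T) p w' q' y' \<and>
        q \<in> fin T \<and> q' \<in> fin T \<and> length w = length w' \<longrightarrow> tout T q @ y = tout T q' @ y')"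

definition star_of :: "'a list set \<Rightarrow> 'a list set" where
  "star_of L = {concat ws | ws. set ws \<subseteq> L}"

definition upto_pow :: "'a list set \<Rightarrow> nat \<Rightarrow> 'a list set" where
  "upto_pow L n = {concat ws | ws. set ws \<subseteq> L \<and> length ws \<le> n}"

definition linear_fooling_scheme ::
  "('a list \<Rightarrow> 'b list option) \<Rightarrow> 'a list \<Rightarrow> 'a list \<Rightarrow> 'a list \<Rightarrow> 'a list \<Rightarrow> 'a list set \<Rightarrow> bool" where
  "linear_fooling_scheme t u2 v2 u v Z \<longleftrightarrow>
     suffix u2 u \<and> suffix v2 v \<and> length u2 = length v2 \<and>
     {x @ w @ z | x w z. x \<in> {u2, v2} \<and> w \<in> star_of {u, v} \<and> z \<in> Z} \<subseteq> dom t \<and>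
     (\<exists>zs :: nat \<Rightarrow> 'a list. (\<forall>n. zs n \<in> Z) \<and>
        (\<exists>C::nat. \<forall>n. length (zs n) \<le> C * n + C) \<and>
        (\<forall>n. \<forall>w \<in> upto_pow {u, v} n. t (u2 @ w @ zs n) \<noteq> t (v2 @ w @ zs n)))"

definition has_linear_fooling_set :: "('a list \<Rightarrow> 'b list option) \<Rightarrow> bool" where
  "has_linear_fooling_set t \<longleftrightarrow> (\<exists>u2 v2 u v Z. linear_fooling_scheme t u2 v2 u v Z)"

end

theory Submission
  imports Defs
begin

lemma rrun_app:
  assumes "rrun D q1 v q y'" and "rrun D p w q1 y"
  shows "rrun D p (v @ w) q (y' @ y)"
  using assms
proof (induction rule: rrun.induct)
  case (rnil)
  then show ?case by simp
next
  case (rcons q a ya q2 s v y'')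
  then have "rrun D p (v @ w) q2 (y'' @ y)" by simp
  from rrun.rcons[OF rcons(1) this] show ?case by simp
qed

lemma rrun_star:
  assumes "set ws \<subseteq> {u, v}" and "rrun D p u p yu" and "rrun D p v p yv"
  shows "\<exists>y. rrun D p (concat ws) p y"
  using assms(1)
proof (induction ws)
  case Nil
  then show ?case using rrun.rnil by fastforce
next
  case (Cons a ws)
  then obtain y where y: "rrun D p (concat ws) p y" by auto
  have "a = u \<or> a = v" using Cons.prems by auto
  then obtain ya where "rrun D p a p ya" using assms by blast
  from rrun_app[OF this y] show ?case by auto
qed

lemma rrun_proj:
  assumes "rrun (trans (project B)) p x q y"
  shows "\<exists>\<omega>. map fst \<omega> = x \<and> rrun (trans B) p \<omega> q y"
  using assms
proof (induction rule: rrun.induct)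
  case (rnil)
  then show ?case using rrun.rnil by fastforce
next
  case (rcons q a ya q1 s w y')
  then obtain \<omega> where o: "map fst \<omega> = w" "rrun (trans B) s \<omega> q1 y'" by auto
  from rcons(1) obtain r where "(q, (a, r), ya, q1) \<in> trans B" by (auto simp: project_def)
  from rrun.rcons[OF this o(2)] o(1) show ?case
    by (intro exI[of _ "(a, r) # \<omega>"]) auto
qed

lemma map_fst_la: "map fst (lookahead_ext R x) = x"
  unfolding lookahead_ext_def by (simp add: comp_def map_nth)

lemma proj_defines:
  assumes "rtt_defines B (ext_fun R t)" and "p0 \<in> init B"
    and "rrun (trans (project B)) p0 x q y" and "q \<in> fin B"
  shows "t x = Some (tout B q @ y)"
proof -
  obtain \<omega> where o: "map fst \<omega> = x" "rrun (trans B) p0 \<omega> q y"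
    using rrun_proj[OF assms(3)] by blast
  have "(\<omega>, tout B q @ y) \<in> rtt_rel B" unfolding rtt_rel_def
    using o assms by blast
  then have e: "ext_fun R t \<omega> = Some (tout B q @ y)"
    using assms(1) unfolding rtt_defines_def by auto
  then have ex: "\<exists>x' \<in> dom t. lookahead_ext R x' = \<omega>"
    unfolding ext_fun_def by (auto split: if_splits)
  then obtain x' where x': "x' \<in> dom t" "lookahead_ext R x' = \<omega>" by blast
  have "x' = x" using x'(2) o(1) map_fst_la[of R x'] by simp
  have th: "(THE x. x \<in> dom t \<and> lookahead_ext R x = \<omega>) = x"
  proof (rule the_equality)
    show "x \<in> dom t \<and> lookahead_ext R x = \<omega>" using x' \<open>x' = x\<close> by simp
    fix z assume "z \<in> dom t \<and> lookahead_ext R z = \<omega>"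
    then show "z = x" using o(1) map_fst_la[of R z] by simp
  qed
  show ?thesis using e ex unfolding ext_fun_def th by simp
qed

theorem proposition23:
  fixes t :: "('a::finite) list \<Rightarrow> 'b list option"
    and B :: "('q, 'a \<times> 'a list set, 'b) rtt"
  assumes "rational_pfun t"
    and "suffix_closed (dom t)"
    and "rtt_wf B (UNIV \<times> classes (Rt t))"
    and "right_subsequential B"
    and "trim B"
    and "rtt_defines B (ext_fun (Rt t) t)"
    and "\<not> well_behaved (project B)"
  shows "has_linear_fooling_set t"
proof -
  let ?A = "project B"
  let ?D = "trans ?A"
  obtain p w w' q q' y y' where p: "p \<in> st B"
    and g: "guarded ?A p w" and g': "guarded ?A p w'"
    and r: "rrun ?D p w q y" and r': "rrun ?D p w' q' y'"
    and f: "q \<in> fin B" and f': "q' \<in> fin B" and len: "length w = length w'"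
    and ne: "tout B q @ y \<noteq> tout B q' @ y'"
    using assms(7) unfolding well_behaved_def by (auto simp: project_def)
  obtain q1 y1 v yv where "rrun ?D p w q1 y1" "rrun ?D q1 v p yv"
    using g unfolding guarded_def below_def by blast
  from rrun_app[OF this(2,1)] have lu: "rrun ?D p (v @ w) p (yv @ y1)" .
  obtain q1' y1' v' yv' where "rrun ?D p w' q1' y1'" "rrun ?D q1' v' p yv'"
    using g' unfolding guarded_def below_def by blast
  from rrun_app[OF this(2,1)] have lv: "rrun ?D p (v' @ w') p (yv' @ y1')" .
  obtain p0 x2 y2 where p0: "p0 \<in> init B" and r0B: "rrun (trans B) p0 x2 p y2"
    using assms(5) p unfolding trim_def by blast
  have r0: "\<exists>y2. rrun ?D p0 (map fst x2) p y2"
  proof -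
    have "rrun ?D p0 (map fst x2) p y2" using r0B
    proof (induction rule: rrun.induct)
      case (rnil) then show ?case using rrun.rnil by simp
    next
      case (rcons q a ya q1 s w y')
      have "(q, fst a, ya, q1) \<in> ?D" using rcons(1)
        by (cases a) (auto simp: project_def)
      from rrun.rcons[OF this rcons(3)] show ?case by simp
    qed
    then show ?thesis by blast
  qed
  then obtain y0 where r0: "rrun ?D p0 (map fst x2) p y0" by blast
  let ?z = "map fst x2"
  have loop: "\<exists>ym. rrun ?D p m p ym" if "m \<in> star_of {v @ w, v' @ w'}" for m
    using that rrun_star[OF _ lu lv] unfolding star_of_def by blast
  have val: "t (w @ m @ ?z) = Some (tout B q @ y @ ym @ y0)"
    "t (w' @ m @ ?z) = Some (tout B q' @ y' @ ym @ y0)"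
    if "rrun ?D p m p ym" for m ym
  proof -
    have "rrun ?D p0 (m @ ?z) p (ym @ y0)" by (rule rrun_app[OF that r0])
    from rrun_app[OF r this] rrun_app[OF r' this]
    show "t (w @ m @ ?z) = Some (tout B q @ y @ ym @ y0)"
      "t (w' @ m @ ?z) = Some (tout B q' @ y' @ ym @ y0)"
      using proj_defines[OF assms(6) p0 _ f] proj_defines[OF assms(6) p0 _ f'] by auto
  qed
  have "linear_fooling_scheme t w w' (v @ w) (v' @ w') {?z}"
    unfolding linear_fooling_scheme_def
  proof (intro conjI)
    show "{x @ m @ z |x m z. x \<in> {w, w'} \<and> m \<in> star_of {v @ w, v' @ w'} \<and> z \<in> {?z}} \<subseteq> dom t"
    proof
      fix s assume "s \<in> {x @ m @ z |x m z. x \<in> {w, w'} \<and> m \<in> star_of {v @ w, v' @ w'} \<and> z \<in> {?z}}"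
      then obtain x m where s: "s = x @ m @ ?z" "x \<in> {w, w'}" "m \<in> star_of {v @ w, v' @ w'}" by blast
      obtain ym where "rrun ?D p m p ym" using loop s(3) by blast
      from val[OF this] s show "s \<in> dom t" by auto
    qed
    show "\<exists>zs. (\<forall>n. zs n \<in> {?z}) \<and> (\<exists>C. \<forall>n. length (zs n) \<le> C * n + C) \<and>
      (\<forall>n. \<forall>m\<in>upto_pow {v @ w, v' @ w'} n. t (w @ m @ zs n) \<noteq> t (w' @ m @ zs n))"
    proof (intro exI[of _ "\<lambda>_. ?z"] conjI allI ballI)
      show "\<exists>C. \<forall>n. length ?z \<le> C * n + C" by (rule exI[of _ "length ?z"]) simp
      fix n m assume "m \<in> upto_pow {v @ w, v' @ w'} n"
      then have "m \<in> star_of {v @ w, v' @ w'}" unfolding upto_pow_def star_of_def by blast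
      then obtain ym where "rrun ?D p m p ym" using loop by blast
      from val[OF this] ne show "t (w @ m @ ?z) \<noteq> t (w' @ m @ ?z)" by simp
    qed simp
  qed (auto simp: len suffix_def)
  then show ?thesis unfolding has_linear_fooling_set_def by blast
qed

end
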